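(* Assume $b_1\ne b_2, c_1=c_2$ or $b_1=b_2, c_1\ne c_2$. 1. If $a_1=a_2$, then both $\check{f}$ and $\widehat{f}$ have no roots. 2. If $a_1\ne a_2$, then either $\check{f}$ or $\widehat{f}$, but not both, has exactly one root $x_0$ at which it changes sign. The corresponding derivative is nonzero at $x_0$.
   Context: A function $f:\mathbb{R}^+\to\mathbb{R}^+$ is called strongly hyperbolic if: (1) $\lim_{x\to 0+} f(x)=+\infty$ and $\lim_{x\to+\infty} f(x)=0$; (2) $f$ is strictly convex; (3) for each $b\in\mathbb{R}$, $\lim_{x\to+\infty} f(x+b)/f(x)=1$; (4) $f$ is differentiable; (5) $\ln|f'(x)|$ is strictly convex. Let $f_1,f_2$ be strongly hyperbolic functions, let $a_1,a_2>0$ and $b_1,b_2,c_1,c_2\in\mathbb{R}$. Define $\check{f}:(\max\{-b_1,-b_2\},+\infty)\to\mathbb{R}$, $\check{f}(x)=a_1f_1(x+b_1)+c_1-a_2f_1(x+b_2)-c_2$, and $\widehat{f}:(-\infty,\min\{-b_1,-b_2\})\to\mathbb{R}$, $\widehat{f}(x)=-a_1f_2(-x-b_1)+c_1+a_2f_2(-x-b_2)-c_2$. *)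

theory Defs
  imports "HOL-Analysis.Analysis"
begin

definition strictly_convex_on :: "real set \<Rightarrow> (real \<Rightarrow> real) \<Rightarrow> bool" where
  "strictly_convex_on S f \<longleftrightarrow>
     (\<forall>x\<in>S. \<forall>y\<in>S. \<forall>t::real. x \<noteq> y \<and> 0 < t \<and> t < 1 \<longrightarrow>
        f (t * x + (1 - t) * y) < t * f x + (1 - t) * f y)"

text \<open>Strongly hyperbolic functions f : (0,inf) -> (0,inf); only the values on {0<..} matter.\<close>
definition strongly_hyperbolic :: "(real \<Rightarrow> real) \<Rightarrow> bool" where
  "strongly_hyperbolic f \<longleftrightarrow>
     (\<forall>x>0. f x > 0) \<and>
     filterlim f at_top (at_right 0) \<and>
     (f \<longlongrightarrow> 0) at_top \<and>
     strictly_convex_on {0<..} f \<and>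
     (\<forall>b::real. ((\<lambda>x. f (x + b) / f x) \<longlongrightarrow> 1) at_top) \<and>
     (\<forall>x>0. f differentiable (at x)) \<and>
     strictly_convex_on {0<..} (\<lambda>x. ln \<bar>deriv f x\<bar>)"

definition changes_sign_at :: "(real \<Rightarrow> real) \<Rightarrow> real \<Rightarrow> bool" where
  "changes_sign_at g x0 \<longleftrightarrow> (\<exists>\<delta>>0.
     ((\<forall>x\<in>{x0-\<delta><..<x0}. g x < 0) \<and> (\<forall>x\<in>{x0<..<x0+\<delta>}. g x > 0)) \<or>
     ((\<forall>x\<in>{x0-\<delta><..<x0}. g x > 0) \<and> (\<forall>x\<in>{x0<..<x0+\<delta>}. g x < 0)))"

definition good_unique_root :: "(real \<Rightarrow> real) \<Rightarrow> real set \<Rightarrow> bool" where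
  "good_unique_root g D \<longleftrightarrow> (\<exists>!x. x \<in> D \<and> g x = 0) \<and>
     (\<forall>x0\<in>D. g x0 = 0 \<longrightarrow> changes_sign_at g x0 \<and>
        (\<exists>d. (g has_real_derivative d) (at x0) \<and> d \<noteq> 0))"

end

theory Submission
  imports Defs
begin



lemma sc_convex: "strictly_convex_on (S::real set) f \<Longrightarrow> convex S \<Longrightarrow> convex_on S f"
proof (rule convex_onI)
  fix t x y :: real assume h: "strictly_convex_on S f" "t > 0" "t < 1" "x \<in> S" "y \<in> S"
  show "f ((1 - t) *\<^sub>R x + t *\<^sub>R y) \<le> (1 - t) * f x + t * f y"
  proof (cases "x = y")
    case True then show ?thesis by (simp add: algebra_simps)
  next
    case False
    have "f ((1-t) * x + (1 - (1-t)) * y) < (1-t) * f x + (1 - (1-t)) * f y"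
      using h(1)[unfolded strictly_convex_on_def, rule_format, of x y "1-t"] h False by simp
    then show ?thesis by simp
  qed
qed

lemma sh_basic:
  assumes "strongly_hyperbolic f" "x > 0"
  shows "f x > 0" "(f has_real_derivative deriv f x) (at x)" "deriv f x < 0"
proof -
  show "f x > 0" using assms unfolding strongly_hyperbolic_def by auto
  show D: "(f has_real_derivative deriv f x) (at x)"
    using assms unfolding strongly_hyperbolic_def by (auto simp: DERIV_deriv_iff_real_differentiable)
  have cv: "convex_on {0<..} f" using assms unfolding strongly_hyperbolic_def
    by (intro sc_convex) auto
  have lim: "(f \<longlongrightarrow> 0) at_top" using assms unfolding strongly_hyperbolic_def by auto
  have tan: "f y - f x \<ge> deriv f x * (y - x)" if "y > 0" for y
    by (rule convex_on_imp_above_tangent[OF cv]) (use that assms D in \<open>auto intro: has_field_derivative_at_within simp: interior_open\<close>)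
  show "deriv f x < 0"
  proof (rule ccontr)
    assume "\<not> deriv f x < 0"
    then have ge: "f y \<ge> f x" if "y \<ge> x" for y
      using tan[of y] that assms(2) by (smt (verit) mult_nonneg_nonneg)
    have "eventually (\<lambda>y. f y < f x) at_top"
      using order_tendstoD(2)[OF lim \<open>f x > 0\<close>] .
    then obtain N where N: "\<forall>y\<ge>N. f y < f x" by (auto simp: eventually_at_top_linorder)
    have "f (max N x) < f x" using N by simp
    moreover have "f (max N x) \<ge> f x" by (rule ge) simp
    ultimately show False by simp
  qed
qed

lemma sh_cont: "strongly_hyperbolic f \<Longrightarrow> x > 0 \<Longrightarrow> isCont f x"
  using sh_basic(2) DERIV_isCont by blast

lemma sh_contS: "strongly_hyperbolic f \<Longrightarrow> S \<subseteq> {0<..} \<Longrightarrow> continuous_on S f"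
  by (intro continuous_at_imp_continuous_on) (auto intro: sh_cont)

lemma sh_dec:
  assumes "strongly_hyperbolic f" "0 < x" "x < y"
  shows "f y < f x"
proof (rule DERIV_neg_imp_decreasing_open[OF assms(3)])
  fix z assume "x < z" "z < y"
  then show "\<exists>d. (f has_real_derivative d) (at z) \<and> d < 0"
    using sh_basic[OF assms(1), of z] assms by auto
qed (rule sh_contS[OF assms(1)], use assms in auto)

lemma sh_surj:
  assumes "strongly_hyperbolic f" "t > 0"
  shows "\<exists>x>0. f x = t"
proof -
  have l0: "filterlim f at_top (at_right 0)" and lim: "(f \<longlongrightarrow> 0) at_top"
    using assms unfolding strongly_hyperbolic_def by auto
  have "eventually (\<lambda>x. f x > t) (at_right 0)"
    using l0 by (simp add: filterlim_at_top_dense)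
  then obtain b where b: "b > 0" "\<And>y. y > 0 \<Longrightarrow> y < b \<Longrightarrow> f y > t"
    by (auto simp: eventually_at_right_field)
  have "eventually (\<lambda>y. f y < t) at_top"
    using order_tendstoD(2)[OF lim \<open>t > 0\<close>] .
  then obtain N where N: "\<And>y. y \<ge> N \<Longrightarrow> f y < t" by (auto simp: eventually_at_top_linorder)
  let ?u1 = "b/2" let ?u2 = "max N b"
  have c: "continuous_on {?u1..?u2} f" by (rule sh_contS[OF assms(1)]) (use b in auto)
  have "f ?u2 \<le> t" using N[of ?u2] by simp
  moreover have "t \<le> f ?u1" using b(2)[of ?u1] b(1) by simp
  moreover have "?u1 \<le> ?u2" using b by simp
  ultimately have "\<exists>x. ?u1 \<le> x \<and> x \<le> ?u2 \<and> f x = t"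
    using IVT2'[OF _ _ _ c] by blast
  then show ?thesis using b by (metis half_gt_zero less_le_trans)
qed




lemma sc_slope:
  assumes sc: "strictly_convex_on S p" and S: "a \<in> S" "c \<in> S" "b \<in> S" and o: "a < b" "b < c"
  shows "(p b - p a)/(b-a) < (p c - p a)/(c-a)" "(p c - p a)/(c-a) < (p c - p b)/(c-b)"
proof -
  define t where "t = (c-b)/(c-a)"
  have t: "0 < t" "t < 1" using o by (auto simp: t_def field_simps)
  have tc: "t * (c-a) = c - b" using o by (simp add: t_def)
  have "t * a + (1-t) * c = c - t * (c-a)" by (simp add: algebra_simps)
  then have bt: "b = t * a + (1-t) * c" using tc by simp
  have "p b < t * p a + (1-t) * p c"
    using sc[unfolded strictly_convex_on_def, rule_format, of a c t] S o t bt by auto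
  then have "(c-a) * p b < (c-a) * (t * p a + (1-t) * p c)" using o by simp
  also have "(c-a) * (t * p a + (1-t) * p c) = ((c-a)*t) * p a + ((c-a) - (c-a)*t) * p c"
    by (simp add: algebra_simps)
  finally have i0: "(c-a) * p b < ((c-a)*t) * p a + ((c-a) - (c-a)*t) * p c" .
  have tc': "(c-a)*t = c-b" using tc by (simp add: mult.commute)
  have tc'': "(c-a) - (c-a)*t = b-a" using tc' by simp
  have i': "(c-a) * p b < (c-b) * p a + (b-a) * p c" using i0 unfolding tc' by (simp add: algebra_simps)
  have e1: "(p b - p a)*(c-a) - (p c - p a)*(b-a) = (c-a)*p b - ((c-b)*p a + (b-a)*p c)"
    by (simp add: algebra_simps)
  have e2: "(p c - p a)*(c-b) - (p c - p b)*(c-a) = (c-a)*p b - ((c-b)*p a + (b-a)*p c)"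
    by (simp add: algebra_simps)
  have "(p b - p a)*(c-a) < (p c - p a)*(b-a)" using e1 i' by linarith
  then show "(p b - p a)/(b-a) < (p c - p a)/(c-a)" using o by (simp add: divide_simps)
  have "(p c - p a)*(c-b) < (p c - p b)*(c-a)" using e2 i' by linarith
  then show "(p c - p a)/(c-a) < (p c - p b)/(c-b)" using o by (simp add: divide_simps)
qed

lemma sc_shift:
  assumes sc: "strictly_convex_on {0<..} p" and "0 < x" "x < y" "d > 0"
  shows "p (x+d) - p x < p (y+d) - p y"
proof -
  have "(p (x+d) - p x)/d < (p (y+d) - p y)/d"
  proof (cases "x + d" y rule: linorder_cases)
    case less
    have "(p (x+d) - p x)/((x+d)-x) < (p y - p x)/(y-x)" 
      using sc_slope[OF sc, of x y "x+d"] assms less by auto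
    also have "\<dots> < (p y - p (x+d))/(y-(x+d))"
      using sc_slope[OF sc, of x y "x+d"] assms less by auto
    also have "\<dots> < (p (y+d) - p (x+d))/((y+d)-(x+d))"
      using sc_slope[OF sc, of "x+d" "y+d" y] assms less by auto
    also have "\<dots> < (p (y+d) - p y)/((y+d)-y)"
      using sc_slope[OF sc, of "x+d" "y+d" y] assms less by auto
    finally show ?thesis by simp
  next
    case equal
    have "(p y - p x)/(y-x) < (p (y+d) - p x)/((y+d)-x)"
      using sc_slope[OF sc, of x "y+d" y] assms by auto
    also have "\<dots> < (p (y+d) - p y)/((y+d)-y)"
      using sc_slope[OF sc, of x "y+d" y] assms by auto
    moreover have "y - x = d" using equal by simp
    ultimately show ?thesis using equal by simp
  next
    case greater
    have "(p (x+d) - p x)/((x+d)-x) < (p (x+d) - p y)/((x+d)-y)" 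
      using sc_slope[OF sc, of x "x+d" y] assms greater by auto
    also have "\<dots> < (p (y+d) - p y)/((y+d)-y)"
      using sc_slope[OF sc, of y "y+d" "x+d"] assms greater by auto
    finally show ?thesis by simp
  qed
  then show ?thesis using assms(4) by (simp add: divide_less_cancel)
qed

lemma sh_logconv:
  assumes sh: "strongly_hyperbolic f" and "0 < x" "x < y" "d > 0"
  shows "deriv f (x+d) * deriv f y < deriv f (y+d) * deriv f x"
proof -
  have sc: "strictly_convex_on {0<..} (\<lambda>x. ln \<bar>deriv f x\<bar>)" using sh unfolding strongly_hyperbolic_def by auto
  have "ln \<bar>deriv f (x+d)\<bar> - ln \<bar>deriv f x\<bar> < ln \<bar>deriv f (y+d)\<bar> - ln \<bar>deriv f y\<bar>"
    using sc_shift[OF sc assms(2-4)] .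
  then have i: "ln \<bar>deriv f (x+d)\<bar> + ln \<bar>deriv f y\<bar> < ln \<bar>deriv f (y+d)\<bar> + ln \<bar>deriv f x\<bar>" by linarith
  have neg: "deriv f x < 0" "deriv f y < 0" "deriv f (x+d) < 0" "deriv f (y+d) < 0"
    using sh_basic(3)[OF sh] assms by auto
  then have pos: "\<bar>deriv f x\<bar> > 0" "\<bar>deriv f y\<bar> > 0" "\<bar>deriv f (x+d)\<bar> > 0" "\<bar>deriv f (y+d)\<bar> > 0"
    by auto
  have "ln (\<bar>deriv f (x+d)\<bar> * \<bar>deriv f y\<bar>) < ln (\<bar>deriv f (y+d)\<bar> * \<bar>deriv f x\<bar>)"
    using i pos by (simp add: ln_mult)
  then have "\<bar>deriv f (x+d)\<bar> * \<bar>deriv f y\<bar> < \<bar>deriv f (y+d)\<bar> * \<bar>deriv f x\<bar>"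
    using pos by (subst (asm) ln_less_cancel_iff) (auto intro: mult_pos_pos)
  then show ?thesis using neg by (simp add: abs_of_neg)
qed



lemma sh_shift_lim:
  assumes "strongly_hyperbolic f"
  shows "((\<lambda>y. f (y + d)) \<longlongrightarrow> 0) at_top"
proof -
  have lim: "(f \<longlongrightarrow> 0) at_top" using assms unfolding strongly_hyperbolic_def by auto
  have "filterlim (\<lambda>y. d + y) at_top at_top"
    by (rule filterlim_tendsto_add_at_top[OF tendsto_const filterlim_ident])
  then have "filterlim (\<lambda>y. y + d) at_top at_top" by (simp add: add.commute)
  from filterlim_compose[OF lim this] show ?thesis by (simp add: o_def)
qed

lemma sh_Q:
  assumes sh: "strongly_hyperbolic f" and "0 < x" "x < y" "d > 0"
  shows "(f x - f y) * (- deriv f (x+d)) < (f (x+d) - f (y+d)) * (- deriv f x)"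
proof -
  define g where "g = (\<lambda>z. - deriv f z)"
  have gpos: "g z > 0" if "z > 0" for z using sh_basic(3)[OF sh that] by (simp add: g_def)
  have D: "(f has_real_derivative deriv f z) (at z)" if "z > 0" for z using sh_basic(2)[OF sh that] .
  have DG: "((\<lambda>z. f (z + d)) has_real_derivative deriv f (z + d)) (at z)" if "z > 0" for z
    using D[of "z+d"] that assms by (simp add: DERIV_shift)
  obtain c where c: "x < c" "c < y" "(f y - f x) * deriv f (c + d) = (f (y+d) - f (x+d)) * deriv f c"
    using GMVT'[of x y f "\<lambda>z. f (z + d)" "\<lambda>z. deriv f (z + d)" "deriv f"] assms D DG
      DERIV_isCont[OF D] DERIV_isCont[OF DG] by force
  have E: "(f x - f y) * g (c + d) = (f (x+d) - f (y+d)) * g c" using c(3) unfolding g_def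
    by (simp add: algebra_simps)
  have L: "g (x+d) * g c < g (c+d) * g x"
    using sh_logconv[OF sh, of x c d] assms c unfolding g_def by simp
  have d2: "f (x+d) - f (y+d) > 0" using sh_dec[OF sh, of "x+d" "y+d"] assms by simp
  have "(f x - f y) * g (x+d) * g (c+d) = ((f x - f y) * g (c + d)) * g (x+d)"
    by (simp add: algebra_simps)
  also have "\<dots> = ((f (x+d) - f (y+d)) * g c) * g (x+d)" using E by simp
  also have "\<dots> = (f (x+d) - f (y+d)) * (g (x+d) * g c)" by (simp add: algebra_simps)
  also have "\<dots> < (f (x+d) - f (y+d)) * (g (c+d) * g x)"
    using L d2 by (rule mult_strict_left_mono)
  also have "\<dots> = (f (x+d) - f (y+d)) * g x * g (c+d)" by (simp add: algebra_simps)
  finally have "(f x - f y) * g (x+d) * g (c+d) < (f (x+d) - f (y+d)) * g x * g (c+d)" .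
  then have "(f x - f y) * g (x+d) < (f (x+d) - f (y+d)) * g x"
    using gpos[of "c+d"] c assms by (simp add: mult_less_cancel_right)
  then show ?thesis by (simp add: g_def)
qed

lemma sh_L1:
  assumes sh: "strongly_hyperbolic f" and "0 < x" "d > 0"
  shows "f x * (- deriv f (x+d)) \<le> f (x+d) * (- deriv f x)"
proof -
  have lim: "(f \<longlongrightarrow> 0) at_top" using sh unfolding strongly_hyperbolic_def by auto
  have T: "((\<lambda>y. (f x - f y) * (- deriv f (x+d)) - (f (x+d) - f (y+d)) * (- deriv f x)) \<longlongrightarrow>
       (f x - 0) * (- deriv f (x+d)) - (f (x+d) - 0) * (- deriv f x)) at_top"
    by (intro tendsto_intros lim sh_shift_lim[OF sh])
  have ev: "eventually (\<lambda>y. (f x - f y) * (- deriv f (x+d)) - (f (x+d) - f (y+d)) * (- deriv f x) \<le> 0) at_top"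
    using eventually_gt_at_top[of x] by eventually_elim (use sh_Q[OF sh] assms in \<open>auto intro: less_imp_le\<close>)
  have "(f x - 0) * (- deriv f (x+d)) - (f (x+d) - 0) * (- deriv f x) \<le> 0"
    by (rule tendsto_le[OF _ tendsto_const T ev]) simp
  then show ?thesis by simp
qed

lemma sh_P:
  assumes sh: "strongly_hyperbolic f" and "0 < x" "d > 0"
  shows "f x * (- deriv f (x+d)) < f (x+d) * (- deriv f x)"
proof -
  define g where "g = (\<lambda>z. - deriv f z)"
  have gpos: "g z > 0" if "z > 0" for z using sh_basic(3)[OF sh that] by (simp add: g_def)
  have Q: "(f x - f (x+1)) * g (x+d) < (f (x+d) - f (x+1+d)) * g x"
    using sh_Q[OF sh, of x "x+1" d] assms by (simp add: g_def add.commute add.left_commute)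
  have L1: "f (x+1) * g (x+1+d) \<le> f (x+1+d) * g (x+1)"
    using sh_L1[OF sh, of "x+1" d] assms by (simp add: g_def)
  have LC: "g (x+d) * g (x+1) < g (x+1+d) * g x"
    using sh_logconv[OF sh, of x "x+1" d] assms by (simp add: g_def add.commute add.left_commute)
  have fp: "f (x+1) > 0" using sh_basic(1)[OF sh, of "x+1"] assms by simp
  have "f (x+1) * g (x+d) * g (x+1) < f (x+1) * (g (x+1+d) * g x)"
    using mult_strict_left_mono[OF LC fp] by (simp add: algebra_simps)
  also have "\<dots> = (f (x+1) * g (x+1+d)) * g x" by (simp add: algebra_simps)
  also have "\<dots> \<le> (f (x+1+d) * g (x+1)) * g x"
    using L1 gpos[of x] assms by (intro mult_right_mono) auto
  finally have "f (x+1) * g (x+d) * g (x+1) < f (x+1+d) * g x * g (x+1)" by (simp add: algebra_simps)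
  then have L2: "f (x+1) * g (x+d) < f (x+1+d) * g x"
    using gpos[of "x+1"] assms by (simp add: mult_less_cancel_right)
  from add_strict_mono[OF Q L2] have "f x * g (x+d) < f (x+d) * g x" by (simp add: algebra_simps)
  then show ?thesis by (simp add: g_def)
qed




lemma sh_R_dec:
  assumes sh: "strongly_hyperbolic f" and "d > 0" "0 < u" "u < v"
  shows "f v / f (v+d) < f u / f (u+d)"
proof (rule DERIV_neg_imp_decreasing_open[OF assms(4)])
  fix z assume z: "u < z" "z < v"
  then have zp: "z > 0" using assms by simp
  have D: "(f has_real_derivative deriv f z) (at z)" using sh_basic(2)[OF sh zp] .
  have DG: "((\<lambda>z. f (z + d)) has_real_derivative deriv f (z + d)) (at z)"
    using sh_basic(2)[OF sh, of "z+d"] zp assms by (simp add: DERIV_shift)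
  have fp: "f (z+d) > 0" using sh_basic(1)[OF sh, of "z+d"] zp assms by simp
  have P: "f z * (- deriv f (z+d)) < f (z+d) * (- deriv f z)" using sh_P[OF sh zp assms(2)] .
  have "((\<lambda>z. f z / f (z+d)) has_real_derivative
      (deriv f z * f (z+d) - f z * deriv f (z+d)) / (f (z+d) * f (z+d))) (at z)"
    by (rule DERIV_divide[OF D DG]) (use fp in simp)
  moreover have "(deriv f z * f (z+d) - f z * deriv f (z+d)) / (f (z+d) * f (z+d)) < 0"
    using P fp by (intro divide_neg_pos) (auto simp: algebra_simps)
  ultimately show "\<exists>y. ((\<lambda>z. f z / f (z+d)) has_real_derivative y) (at z) \<and> y < 0" by blast
next
  have c1: "continuous_on {u..v} f" by (intro sh_contS[OF sh]) (use assms in auto)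
  have "isCont (\<lambda>z. f (z + d)) z" if "z \<in> {u..v}" for z
  proof -
    have "((\<lambda>z. f (z + d)) has_real_derivative deriv f (z + d)) (at z)"
      using sh_basic(2)[OF sh, of "z+d"] that assms by (simp add: DERIV_shift)
    then show ?thesis by (rule DERIV_isCont)
  qed
  then have c2: "continuous_on {u..v} (\<lambda>z. f (z+d))" by (intro continuous_at_imp_continuous_on) auto
  have nz: "\<forall>z\<in>{u..v}. f (z+d) \<noteq> 0"
  proof
    fix z assume "z \<in> {u..v}"
    then have "f (z+d) > 0" using sh_basic(1)[OF sh, of "z+d"] assms by simp
    then show "f (z+d) \<noteq> 0" by simp
  qed
  show "continuous_on {u..v} (\<lambda>z. f z / f (z+d))" by (rule continuous_on_divide[OF c1 c2 nz])
qed

lemma NA: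
  assumes sh: "strongly_hyperbolic f" and dp: "d > 0" and a1: "a1 > 0" and a2: "a2 > 0"
  defines "K \<equiv> \<lambda>u. a1 * f u - a2 * f (u+d)"
  shows "\<not> a1 < a2 \<Longrightarrow> u > 0 \<Longrightarrow> K u \<noteq> 0"
    and "a1 < a2 \<Longrightarrow> good_unique_root K {0<..}"
proof -
  assume "\<not> a1 < a2" "u > 0"
  then have le: "a2 \<le> a1" "f (u+d) < f u" "f (u+d) > 0"
    using sh_dec[OF sh, of u "u+d"] sh_basic(1)[OF sh, of "u+d"] dp by auto
  have "a1 * f u > a1 * f (u + d)" using le a1 by simp
  moreover have "a1 * f (u+d) \<ge> a2 * f (u+d)" using le by (intro mult_right_mono) auto
  ultimately have "a1 * f u > a2 * f (u+d)" by linarith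
  then show "K u \<noteq> 0" unfolding K_def by simp
next
  assume lt: "a1 < a2"
  define R where "R = (\<lambda>u. f u / f (u+d))"
  have fp: "f z > 0" if "z > 0" for z using sh_basic(1)[OF sh that] .
  have KR: "sgn (K u) = sgn (R u - a2/a1)" if "u > 0" for u
  proof -
    have p: "f (u+d) > 0" using fp[of "u+d"] that dp by simp
    have "K u = a1 * f (u+d) * (R u - a2/a1)" unfolding K_def R_def using p a1 by (simp add: right_diff_distrib)
    then show ?thesis using p a1 by (simp add: sgn_mult)
  qed
  have Rdec: "R v < R u" if "0 < u" "u < v" for u v unfolding R_def using sh_R_dec[OF sh dp that] .
  have Kd: "(K has_real_derivative (a1 * deriv f u - a2 * deriv f (u+d))) (at u)" if "u > 0" for u
  proof -
    have DG: "((\<lambda>z. f (z + d)) has_real_derivative deriv f (u + d)) (at u)"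
      using sh_basic(2)[OF sh, of "u+d"] that dp by (simp add: DERIV_shift)
    show ?thesis unfolding K_def
      using DERIV_diff[OF DERIV_cmult[OF sh_basic(2)[OF sh that], of a1] DERIV_cmult[OF DG, of a2]] by simp
  qed
  have Kc: "continuous_on S K" if "S \<subseteq> {0<..}" for S
    using that Kd by (intro continuous_at_imp_continuous_on) (auto intro: DERIV_isCont)
  have l0: "filterlim f at_top (at_right 0)" and l1: "\<forall>b. ((\<lambda>x. f (x + b) / f x) \<longlongrightarrow> 1) at_top"
    using sh unfolding strongly_hyperbolic_def by auto
  have "eventually (\<lambda>x. f x > a2 * f d / a1) (at_right 0)"
    using l0 by (simp add: filterlim_at_top_dense)
  then obtain b where b: "b > 0" "\<And>y. y > 0 \<Longrightarrow> y < b \<Longrightarrow> f y > a2 * f d / a1"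
    by (auto simp: eventually_at_right_field)
  have "eventually (\<lambda>x. f (x + d) / f x > a1 / a2) at_top"
    using order_tendstoD(1)[OF l1[rule_format, of d]] lt a2 by simp
  then obtain N where N: "\<And>y. y \<ge> N \<Longrightarrow> f (y + d) / f y > a1 / a2" by (auto simp: eventually_at_top_linorder)
  define u1 where "u1 = b/2"
  define u2 where "u2 = max N b"
  have u12: "0 < u1" "u1 \<le> u2" using b by (auto simp: u1_def u2_def)
  have "K u1 > 0"
  proof -
    have "f u1 > a2 * f d / a1" using b u12 by (auto simp: u1_def)
    then have A: "a1 * f u1 > a2 * f d" using a1 by (simp add: pos_divide_less_eq mult.commute)
    have "f (u1 + d) < f d" using sh_dec[OF sh, of d "u1+d"] dp u12 by simp
    then have "a2 * f (u1 + d) < a2 * f d" using a2 by simp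
    with A show ?thesis unfolding K_def by simp
  qed
  moreover have "K u2 < 0"
  proof -
    have "f (u2 + d) / f u2 > a1 / a2" using N[of u2] by (simp add: u2_def)
    then have "a2 * f (u2 + d) > a1 * f u2" using a2 fp[of u2] u12
      by (simp add: pos_divide_less_eq pos_less_divide_eq mult.commute)
    then show ?thesis unfolding K_def by simp
  qed
  ultimately obtain u0 where u0: "u1 \<le> u0" "u0 \<le> u2" "K u0 = 0"
    using IVT2'[of K u2 0 u1] u12 Kc[of "{u1..u2}"] by force
  have u0p: "u0 > 0" using u0 u12 by simp
  have Ru0: "R u0 = a2/a1" using KR[OF u0p] u0 by (simp add: sgn_eq_0_iff)
  have uniq: "u = u0" if "u > 0" "K u = 0" for u
  proof -
    have "R u = a2/a1" using KR[OF that(1)] that by (simp add: sgn_eq_0_iff)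
    then show ?thesis using Rdec[of u u0] Rdec[of u0 u] u0p that Ru0 by (cases u u0 rule: linorder_cases) auto
  qed
  have cs: "changes_sign_at K u0"
    unfolding changes_sign_at_def
  proof (intro exI[of _ u0] conjI disjI2 ballI)
    show "u0 > 0" by (rule u0p)
  next
    fix u assume "u \<in> {u0 - u0<..<u0}"
    then have "0 < u" "u < u0" by auto
    then have "R u > a2/a1" using Rdec[of u u0] Ru0 by simp
    then show "K u > 0" using KR[of u] \<open>0 < u\<close> by (simp add: sgn_1_pos)
  next
    fix u assume "u \<in> {u0<..<u0 + u0}"
    then have "0 < u0" "u0 < u" by (auto simp: u0p)
    then have "R u < a2/a1" using Rdec[of u0 u] Ru0 by simp
    then show "K u < 0" using KR[of u] \<open>0 < u0\<close> \<open>u0 < u\<close> by (simp add: sgn_1_neg)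
  qed
  have dn: "a1 * deriv f u0 - a2 * deriv f (u0+d) \<noteq> 0"
  proof -
    have P: "f u0 * (- deriv f (u0+d)) < f (u0+d) * (- deriv f u0)" using sh_P[OF sh u0p dp] .
    have e: "a1 * f u0 = a2 * f (u0+d)" using u0 unfolding K_def by simp
    have p: "f (u0+d) > 0" using fp[of "u0+d"] u0p dp by simp
    have "(a1 * deriv f u0 - a2 * deriv f (u0+d)) * f (u0+d) = a1 * deriv f u0 * f (u0+d) - (a2 * f (u0+d)) * deriv f (u0+d)"
      by (simp add: algebra_simps)
    also have "\<dots> = a1 * (deriv f u0 * f (u0+d) - f u0 * deriv f (u0+d))" unfolding e[symmetric] by (simp add: algebra_simps)
    finally have eq: "(a1 * deriv f u0 - a2 * deriv f (u0+d)) * f (u0+d) = a1 * (deriv f u0 * f (u0+d) - f u0 * deriv f (u0+d))" .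
    have "deriv f u0 * f (u0+d) - f u0 * deriv f (u0+d) < 0" using P by (simp add: algebra_simps)
    then have "a1 * (deriv f u0 * f (u0+d) - f u0 * deriv f (u0+d)) < 0" using a1 by (simp add: mult_pos_neg)
    then show ?thesis using eq by auto
  qed
  show "good_unique_root K {0<..}"
    unfolding good_unique_root_def
  proof (intro conjI ballI impI)
    have "u0 \<in> {0<..} \<and> K u0 = 0" using u0p u0(3) by simp
    moreover have "x = u0" if "x \<in> {0<..} \<and> K x = 0" for x using that uniq[of x] by simp
    ultimately show "\<exists>!x. x \<in> {0<..} \<and> K x = 0" by blast
  next
    fix x0 assume "x0 \<in> {0::real<..}" "K x0 = 0"
    then have "x0 = u0" using uniq[of x0] by simp
    then show "changes_sign_at K x0" "\<exists>d. (K has_real_derivative d) (at x0) \<and> d \<noteq> 0"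
      using cs Kd[OF u0p] dn by blast+
  qed
qed





lemma cs_neg: "changes_sign_at g x0 \<Longrightarrow> changes_sign_at (\<lambda>x. - g x) x0"
  unfolding changes_sign_at_def by (auto simp: neg_less_0_iff_less)

lemma gur_neg: "good_unique_root g D \<Longrightarrow> good_unique_root (\<lambda>x. - g x) D"
  unfolding good_unique_root_def
proof (elim conjE, intro conjI ballI impI)
  assume "\<exists>!x. x \<in> D \<and> g x = 0"
  then show "\<exists>!x. x \<in> D \<and> - g x = 0" by simp
next
  fix x0 assume h: "\<forall>x0\<in>D. g x0 = 0 \<longrightarrow> changes_sign_at g x0 \<and> (\<exists>d. (g has_real_derivative d) (at x0) \<and> d \<noteq> 0)"
    and x0: "x0 \<in> D" "- g x0 = 0"
  then have "changes_sign_at g x0" and "\<exists>d. (g has_real_derivative d) (at x0) \<and> d \<noteq> 0" by auto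
  then obtain d where d: "(g has_real_derivative d) (at x0)" "d \<noteq> 0" by blast
  show "changes_sign_at (\<lambda>x. - g x) x0" by (rule cs_neg) fact
  show "\<exists>d. ((\<lambda>x. - g x) has_real_derivative d) (at x0) \<and> d \<noteq> 0"
    using DERIV_minus[OF d(1)] d(2) by auto
qed

lemma cs_shift: "changes_sign_at g (x0 + c) \<Longrightarrow> changes_sign_at (\<lambda>x. g (x + c)) x0"
  unfolding changes_sign_at_def
proof (elim exE conjE)
  fix \<delta> :: real assume d: "\<delta> > 0" and h: "(\<forall>x\<in>{x0 + c - \<delta><..<x0 + c}. g x < 0) \<and> (\<forall>x\<in>{x0 + c<..<x0 + c + \<delta>}. 0 < g x) \<or>
    (\<forall>x\<in>{x0 + c - \<delta><..<x0 + c}. 0 < g x) \<and> (\<forall>x\<in>{x0 + c<..<x0 + c + \<delta>}. g x < 0)"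
  show "\<exists>\<delta>>0. (\<forall>x\<in>{x0 - \<delta><..<x0}. g (x + c) < 0) \<and> (\<forall>x\<in>{x0<..<x0 + \<delta>}. 0 < g (x + c)) \<or>
          (\<forall>x\<in>{x0 - \<delta><..<x0}. 0 < g (x + c)) \<and> (\<forall>x\<in>{x0<..<x0 + \<delta>}. g (x + c) < 0)"
  proof -
    have m1: "x + c \<in> {x0 + c - \<delta><..<x0 + c}" if "x \<in> {x0 - \<delta><..<x0}" for x using that by auto
    have m2: "x + c \<in> {x0 + c<..<x0 + c + \<delta>}" if "x \<in> {x0<..<x0 + \<delta>}" for x using that by auto
    show ?thesis by (rule exI[of _ \<delta>]) (use d h m1 m2 in blast)
  qed
qed

lemma gur_shift: "good_unique_root g D \<Longrightarrow> good_unique_root (\<lambda>x. g (x + c)) {x. x + c \<in> D}"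
  unfolding good_unique_root_def
proof (elim conjE, intro conjI ballI impI)
  assume "\<exists>!x. x \<in> D \<and> g x = 0"
  then obtain y where y: "y \<in> D" "g y = 0" "\<And>z. z \<in> D \<Longrightarrow> g z = 0 \<Longrightarrow> z = y" by blast
  show "\<exists>!x. x \<in> {x. x + c \<in> D} \<and> g (x + c) = 0"
  proof (rule ex1I[of _ "y - c"])
    show "y - c \<in> {x. x + c \<in> D} \<and> g (y - c + c) = 0" using y(1,2) by simp
  next
    fix x assume "x \<in> {x. x + c \<in> D} \<and> g (x + c) = 0"
    then have "x + c = y" using y(3)[of "x + c"] by simp
    then show "x = y - c" by simp
  qed
next
  fix x0 assume h: "\<forall>x0\<in>D. g x0 = 0 \<longrightarrow> changes_sign_at g x0 \<and> (\<exists>d. (g has_real_derivative d) (at x0) \<and> d \<noteq> 0)"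
    and x0: "x0 \<in> {x. x + c \<in> D}" "g (x0 + c) = 0"
  then have "changes_sign_at g (x0 + c)" and "\<exists>d. (g has_real_derivative d) (at (x0 + c)) \<and> d \<noteq> 0" by auto
  then obtain d where d: "(g has_real_derivative d) (at (x0 + c))" "d \<noteq> 0" by blast
  show "changes_sign_at (\<lambda>x. g (x + c)) x0" by (rule cs_shift) fact
  show "\<exists>d. ((\<lambda>x. g (x + c)) has_real_derivative d) (at x0) \<and> d \<noteq> 0"
    using d DERIV_shift[of g d x0 c] by blast
qed

lemma cs_refl: "changes_sign_at g (- x0) \<Longrightarrow> changes_sign_at (\<lambda>x. g (- x)) x0"
  unfolding changes_sign_at_def
proof (elim exE conjE)
  fix \<delta> :: real assume d: "\<delta> > 0" and h: "(\<forall>x\<in>{- x0 - \<delta><..<- x0}. g x < 0) \<and> (\<forall>x\<in>{- x0<..<- x0 + \<delta>}. 0 < g x) \<or>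
    (\<forall>x\<in>{- x0 - \<delta><..<- x0}. 0 < g x) \<and> (\<forall>x\<in>{- x0<..<- x0 + \<delta>}. g x < 0)"
  have m1: "- x \<in> {- x0<..<- x0 + \<delta>}" if "x \<in> {x0 - \<delta><..<x0}" for x using that by auto
  have m2: "- x \<in> {- x0 - \<delta><..<- x0}" if "x \<in> {x0<..<x0 + \<delta>}" for x using that by auto
  show "\<exists>\<delta>>0. (\<forall>x\<in>{x0 - \<delta><..<x0}. g (- x) < 0) \<and> (\<forall>x\<in>{x0<..<x0 + \<delta>}. 0 < g (- x)) \<or>
          (\<forall>x\<in>{x0 - \<delta><..<x0}. 0 < g (- x)) \<and> (\<forall>x\<in>{x0<..<x0 + \<delta>}. g (- x) < 0)"
    by (rule exI[of _ \<delta>]) (use d h m1 m2 in blast)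
qed

lemma gur_refl: "good_unique_root g D \<Longrightarrow> good_unique_root (\<lambda>x. g (- x)) {x. - x \<in> D}"
  unfolding good_unique_root_def
proof (elim conjE, intro conjI ballI impI)
  assume "\<exists>!x. x \<in> D \<and> g x = 0"
  then obtain y where y: "y \<in> D" "g y = 0" "\<And>z. z \<in> D \<Longrightarrow> g z = 0 \<Longrightarrow> z = y" by blast
  show "\<exists>!x. x \<in> {x. - x \<in> D} \<and> g (- x) = 0"
  proof (rule ex1I[of _ "- y"])
    show "- y \<in> {x. - x \<in> D} \<and> g (- (- y)) = 0" using y(1,2) by simp
  next
    fix x assume "x \<in> {x. - x \<in> D} \<and> g (- x) = 0"
    then have "- x = y" using y(3)[of "- x"] by simp
    then show "x = - y" by simp
  qed
next
  fix x0 assume h: "\<forall>x0\<in>D. g x0 = 0 \<longrightarrow> changes_sign_at g x0 \<and> (\<exists>d. (g has_real_derivative d) (at x0) \<and> d \<noteq> 0)"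
    and x0: "x0 \<in> {x. - x \<in> D}" "g (- x0) = 0"
  then have "changes_sign_at g (- x0)" and "\<exists>d. (g has_real_derivative d) (at (- x0)) \<and> d \<noteq> 0" by auto
  then obtain d where d: "(g has_real_derivative d) (at (- x0))" "d \<noteq> 0" by blast
  show "changes_sign_at (\<lambda>x. g (- x)) x0" by (rule cs_refl) fact
  have "((\<lambda>x. g (- x)) has_real_derivative d * (- 1)) (at x0)"
    using DERIV_chain2[OF d(1) DERIV_minus[OF DERIV_ident, of x0]] by simp
  then show "\<exists>d. ((\<lambda>x. g (- x)) has_real_derivative d) (at x0) \<and> d \<noteq> 0"
    using d(2) by (intro exI[of _ "d * (- 1)"]) auto
qed




lemma NB:
  assumes sh: "strongly_hyperbolic f" and ne: "a1 \<noteq> a2" and cc: "cc \<noteq> 0"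
  defines "K \<equiv> \<lambda>u. (a1 - a2) * f u + cc"
  shows "\<not> (- cc / (a1 - a2) > 0) \<Longrightarrow> u > 0 \<Longrightarrow> K u \<noteq> 0"
    and "- cc / (a1 - a2) > 0 \<Longrightarrow> good_unique_root K {0<..}"
proof -
  define t where "t = - cc / (a1 - a2)"
  have at: "(a1 - a2) * t = - cc" using ne by (simp add: t_def)
  have Kt: "K u = (a1 - a2) * (f u - t)" for u
    unfolding K_def right_diff_distrib at by simp
  have ne0: "a1 - a2 \<noteq> 0" using ne by simp
  {
    assume "\<not> (- cc / (a1 - a2) > 0)" "u > 0"
    then have "f u - t > 0" using sh_basic(1)[OF sh, of u] by (simp add: t_def)
    then show "K u \<noteq> 0" using Kt[of u] ne0 by simp
  }
  assume tp: "- cc / (a1 - a2) > 0"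
  then have "t > 0" by (simp add: t_def)
  then obtain u0 where u0: "u0 > 0" "f u0 = t" using sh_surj[OF sh, of t] by blast
  have uniq: "u = u0" if "u > 0" "f u = t" for u
    using sh_dec[OF sh, of u u0] sh_dec[OF sh, of u0 u] that u0 by (cases u u0 rule: linorder_cases) auto
  have left: "f u - t > 0" if "0 < u" "u < u0" for u using sh_dec[OF sh that] u0 by simp
  have right: "f u - t < 0" if "u0 < u" for u using sh_dec[OF sh u0(1) that] u0 by simp
  have cs: "changes_sign_at K u0"
    unfolding changes_sign_at_def
  proof (rule exI[of _ u0], intro conjI)
    show "u0 > 0" by (rule u0(1))
    show "(\<forall>x\<in>{u0 - u0<..<u0}. K x < 0) \<and> (\<forall>x\<in>{u0<..<u0 + u0}. 0 < K x) \<or>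
      (\<forall>x\<in>{u0 - u0<..<u0}. 0 < K x) \<and> (\<forall>x\<in>{u0<..<u0 + u0}. K x < 0)"
    proof (cases "a1 - a2 > 0")
      case True
      have "\<forall>x\<in>{u0 - u0<..<u0}. 0 < K x"
        using left True by (auto simp: Kt intro!: mult_pos_pos)
      moreover have "\<forall>x\<in>{u0<..<u0 + u0}. K x < 0"
        using right True by (auto simp: Kt intro!: mult_pos_neg)
      ultimately show ?thesis by blast
    next
      case False
      then have n: "a1 - a2 < 0" using ne0 by linarith
      have "\<forall>x\<in>{u0 - u0<..<u0}. K x < 0"
        using left n by (auto simp: Kt intro!: mult_neg_pos)
      moreover have "\<forall>x\<in>{u0<..<u0 + u0}. 0 < K x"
        using right n by (auto simp: Kt intro!: mult_neg_neg)
      ultimately show ?thesis by blast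
    qed
  qed
  have Kd: "(K has_real_derivative ((a1 - a2) * deriv f u0)) (at u0)"
    unfolding K_def using DERIV_add[OF DERIV_cmult[OF sh_basic(2)[OF sh u0(1)], of "a1 - a2"] DERIV_const[of cc "at u0"]]
    by simp
  have dn: "(a1 - a2) * deriv f u0 \<noteq> 0" using ne0 sh_basic(3)[OF sh u0(1)] by simp
  show "good_unique_root K {0<..}"
    unfolding good_unique_root_def
  proof (intro conjI ballI impI)
    have "u0 \<in> {0<..} \<and> K u0 = 0" using u0 Kt[of u0] by simp
    moreover have "x = u0" if "x \<in> {0<..} \<and> K x = 0" for x
      using that uniq[of x] Kt[of x] ne0 by simp
    ultimately show "\<exists>!x. x \<in> {0<..} \<and> K x = 0" by blast
  next
    fix x0 assume "x0 \<in> {0::real<..}" "K x0 = 0"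
    then have "x0 = u0" using uniq[of x0] Kt[of x0] ne0 by simp
    then show "changes_sign_at K x0" "\<exists>d. (K has_real_derivative d) (at x0) \<and> d \<noteq> 0"
      using cs Kd dn by blast+
  qed
qed




lemma G:
  assumes sh: "strongly_hyperbolic f" and a1: "a1 > 0" and a2: "a2 > 0"
    and hbc: "(b1 \<noteq> b2 \<and> c1 = c2) \<or> (b1 = b2 \<and> c1 \<noteq> c2)"
  defines "F \<equiv> \<lambda>x. a1 * f (x + b1) + c1 - a2 * f (x + b2) - c2"
    and "D \<equiv> {max (- b1) (- b2)<..}"
    and "S \<equiv> (if b1 = b2 then (a2 < a1) = (c1 < c2) else (b1 < b2) = (a1 < a2))"
  shows "a1 = a2 \<Longrightarrow> x \<in> D \<Longrightarrow> F x \<noteq> 0"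
    and "a1 \<noteq> a2 \<Longrightarrow> S \<Longrightarrow> good_unique_root F D"
    and "a1 \<noteq> a2 \<Longrightarrow> \<not> S \<Longrightarrow> x \<in> D \<Longrightarrow> F x \<noteq> 0"
proof -
  consider (B) "b1 = b2" "c1 \<noteq> c2" | (A1) "b1 < b2" "c1 = c2" | (A2) "b2 < b1" "c1 = c2"
    using hbc by (cases b1 b2 rule: linorder_cases) auto
  then have res: "(a1 = a2 \<longrightarrow> (\<forall>x\<in>D. F x \<noteq> 0)) \<and> (a1 \<noteq> a2 \<longrightarrow> S \<longrightarrow> good_unique_root F D)
      \<and> (a1 \<noteq> a2 \<longrightarrow> \<not> S \<longrightarrow> (\<forall>x\<in>D. F x \<noteq> 0))"
  proof cases
    case B
    define K where "K = (\<lambda>u. (a1 - a2) * f u + (c1 - c2))"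
    have FK: "F = (\<lambda>x. K (x + b1))" unfolding F_def K_def using B by (auto simp: algebra_simps)
    have DK: "D = {x. x + b1 \<in> {0<..}}" unfolding D_def using B by auto
    have cc: "c1 - c2 \<noteq> 0" using B by simp
    have SB: "S = (a1 \<noteq> a2 \<and> - (c1 - c2) / (a1 - a2) > 0)" if "a1 \<noteq> a2"
    proof -
      have "S = ((a2 < a1) = (c1 < c2))" unfolding S_def using B by simp
      also have "\<dots> = (- (c1 - c2) / (a1 - a2) > 0)"
        using that B by (cases "a2 < a1"; cases "c1 < c2") (auto simp: zero_less_divide_iff)
      finally show ?thesis using that by simp
    qed
    show ?thesis
    proof (intro conjI impI ballI)
      fix x assume "a1 = a2" "x \<in> D"
      then show "F x \<noteq> 0" using cc unfolding F_def using B by simp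
    next
      assume ne: "a1 \<noteq> a2" and "S"
      then have "- (c1 - c2) / (a1 - a2) > 0" using SB by simp
      from gur_shift[OF NB(2)[OF sh ne cc this], of b1]
      show "good_unique_root F D" unfolding FK DK K_def .
    next
      fix x assume ne: "a1 \<noteq> a2" and "\<not> S" "x \<in> D"
      then have "\<not> - (c1 - c2) / (a1 - a2) > 0" "x + b1 > 0" using SB DK by auto
      from NB(1)[OF sh ne cc this] show "F x \<noteq> 0" unfolding FK K_def .
    qed
  next
    case A1
    define d where "d = b2 - b1"
    have dp: "d > 0" using A1 by (simp add: d_def)
    define K where "K = (\<lambda>u. a1 * f u - a2 * f (u + d))"
    have FK: "F = (\<lambda>x. K (x + b1))" unfolding F_def K_def d_def using A1 by (auto simp: algebra_simps)
    have DK: "D = {x. x + b1 \<in> {0<..}}" unfolding D_def using A1 by auto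
    have SA: "S = (a1 < a2)" unfolding S_def using A1 by simp
    show ?thesis
    proof (intro conjI impI ballI)
      fix x assume "a1 = a2" "x \<in> D"
      then have "\<not> a1 < a2" "x + b1 > 0" using DK by auto
      from NA(1)[OF sh dp a1 a2 this] show "F x \<noteq> 0" unfolding FK K_def .
    next
      assume ne: "a1 \<noteq> a2" and "S"
      then have "a1 < a2" using SA by simp
      from gur_shift[OF NA(2)[OF sh dp a1 a2 this], of b1]
      show "good_unique_root F D" unfolding FK DK K_def .
    next
      fix x assume ne: "a1 \<noteq> a2" and "\<not> S" "x \<in> D"
      then have "\<not> a1 < a2" "x + b1 > 0" using SA DK by auto
      from NA(1)[OF sh dp a1 a2 this] show "F x \<noteq> 0" unfolding FK K_def .
    qed
  next
    case A2
    define d where "d = b1 - b2"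
    have dp: "d > 0" using A2 by (simp add: d_def)
    define K where "K = (\<lambda>u. a2 * f u - a1 * f (u + d))"
    have FK: "F = (\<lambda>x. - K (x + b2))" unfolding F_def K_def d_def using A2 by (auto simp: algebra_simps)
    have DK: "D = {x. x + b2 \<in> {0<..}}" unfolding D_def using A2 by auto
    have SA: "S = (\<not> a1 < a2)" unfolding S_def using A2 by simp
    show ?thesis
    proof (intro conjI impI ballI)
      fix x assume "a1 = a2" "x \<in> D"
      then have "\<not> a2 < a1" "x + b2 > 0" using DK by auto
      from NA(1)[OF sh dp a2 a1 this] show "F x \<noteq> 0" unfolding FK K_def by simp
    next
      assume ne: "a1 \<noteq> a2" and "S"
      then have "a2 < a1" using SA by simp
      from gur_neg[OF gur_shift[OF NA(2)[OF sh dp a2 a1 this], of b2]]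
      show "good_unique_root F D" unfolding FK DK K_def .
    next
      fix x assume ne: "a1 \<noteq> a2" and "\<not> S" "x \<in> D"
      then have "\<not> a2 < a1" "x + b2 > 0" using SA DK by auto
      from NA(1)[OF sh dp a2 a1 this] show "F x \<noteq> 0" unfolding FK K_def by simp
    qed
  qed
  show "a1 = a2 \<Longrightarrow> x \<in> D \<Longrightarrow> F x \<noteq> 0" using res by blast
  show "a1 \<noteq> a2 \<Longrightarrow> S \<Longrightarrow> good_unique_root F D" using res by blast
  show "a1 \<noteq> a2 \<Longrightarrow> \<not> S \<Longrightarrow> x \<in> D \<Longrightarrow> F x \<noteq> 0" using res by blast
qed


theorem lemma3p6:
  fixes f1 f2 :: "real \<Rightarrow> real" and a1 a2 b1 b2 c1 c2 :: real
  assumes hf1: "strongly_hyperbolic f1" and hf2: "strongly_hyperbolic f2"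
    and ha1: "a1 > 0" and ha2: "a2 > 0"
    and hbc: "(b1 \<noteq> b2 \<and> c1 = c2) \<or> (b1 = b2 \<and> c1 \<noteq> c2)"
  defines "fchk \<equiv> (\<lambda>x. a1 * f1 (x + b1) + c1 - a2 * f1 (x + b2) - c2)"
    and "fhat \<equiv> (\<lambda>x. - a1 * f2 (- x - b1) + c1 + a2 * f2 (- x - b2) - c2)"
    and "Dchk \<equiv> {max (- b1) (- b2)<..}"
    and "Dhat \<equiv> {..<min (- b1) (- b2)}"
  shows "(a1 = a2 \<longrightarrow> (\<forall>x\<in>Dchk. fchk x \<noteq> 0) \<and> (\<forall>x\<in>Dhat. fhat x \<noteq> 0))
       \<and> (a1 \<noteq> a2 \<longrightarrow>
            ((\<exists>!x. x \<in> Dchk \<and> fchk x = 0) \<noteq> (\<exists>!x. x \<in> Dhat \<and> fhat x = 0)) \<and>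
            ((\<exists>!x. x \<in> Dchk \<and> fchk x = 0) \<longrightarrow> good_unique_root fchk Dchk) \<and>
            ((\<exists>!x. x \<in> Dhat \<and> fhat x = 0) \<longrightarrow> good_unique_root fhat Dhat))"
proof -
  define S where "S = (if b1 = b2 then (a2 < a1) = (c1 < c2) else (b1 < b2) = (a1 < a2))"
  define F2 where "F2 = (\<lambda>x. a1 * f2 (x + - b1) + c2 - a2 * f2 (x + - b2) - c1)"
  define D2 where "D2 = {max (- (- b1)) (- (- b2))<..}"
  define S2 where "S2 = (if - b1 = - b2 then (a2 < a1) = (c2 < c1) else (- b1 < - b2) = (a1 < a2))"
  have hbc2: "(- b1 \<noteq> - b2 \<and> c2 = c1) \<or> (- b1 = - b2 \<and> c2 \<noteq> c1)" using hbc by auto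
  have G1a: "a1 = a2 \<Longrightarrow> x \<in> Dchk \<Longrightarrow> fchk x \<noteq> 0" for x
    using G(1)[OF hf1 ha1 ha2 hbc, of x] unfolding fchk_def Dchk_def by blast
  have G1b: "a1 \<noteq> a2 \<Longrightarrow> S \<Longrightarrow> good_unique_root fchk Dchk"
    using G(2)[OF hf1 ha1 ha2 hbc] unfolding fchk_def Dchk_def S_def by blast
  have G1c: "a1 \<noteq> a2 \<Longrightarrow> \<not> S \<Longrightarrow> x \<in> Dchk \<Longrightarrow> fchk x \<noteq> 0" for x
    using G(3)[OF hf1 ha1 ha2 hbc, of x] unfolding fchk_def Dchk_def S_def by blast
  have G2a: "a1 = a2 \<Longrightarrow> x \<in> D2 \<Longrightarrow> F2 x \<noteq> 0" for x
    using G(1)[OF hf2 ha1 ha2 hbc2, of x] unfolding F2_def D2_def by blast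
  have G2b: "a1 \<noteq> a2 \<Longrightarrow> S2 \<Longrightarrow> good_unique_root F2 D2"
    using G(2)[OF hf2 ha1 ha2 hbc2] unfolding F2_def D2_def S2_def by blast
  have G2c: "a1 \<noteq> a2 \<Longrightarrow> \<not> S2 \<Longrightarrow> x \<in> D2 \<Longrightarrow> F2 x \<noteq> 0" for x
    using G(3)[OF hf2 ha1 ha2 hbc2, of x] unfolding F2_def D2_def S2_def by blast
  have fhF: "fhat = (\<lambda>x. - F2 (- x))" unfolding fhat_def F2_def by (auto simp: algebra_simps)
  have DhD: "Dhat = {x. - x \<in> D2}" unfolding Dhat_def D2_def by auto
  have hat_nz: "\<forall>x\<in>Dhat. fhat x \<noteq> 0" if "\<And>y. y \<in> D2 \<Longrightarrow> F2 y \<noteq> 0"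
    using that unfolding fhF DhD by auto
  have hat_gur: "good_unique_root fhat Dhat" if "good_unique_root F2 D2"
    unfolding fhF DhD by (rule gur_neg[OF gur_refl[OF that]])
  have gur_ex: "good_unique_root g D \<Longrightarrow> (\<exists>!x. x \<in> D \<and> g x = 0)" for g D
    unfolding good_unique_root_def by blast
  have SS: "S2 = (\<not> S)" if "a1 \<noteq> a2"
    unfolding S_def S2_def using hbc that by auto
  show ?thesis
  proof (intro conjI impI)
    assume "a1 = a2"
    then show "\<forall>x\<in>Dchk. fchk x \<noteq> 0" "\<forall>x\<in>Dhat. fhat x \<noteq> 0"
      using G1a G2a hat_nz by blast+
  next
    assume ne: "a1 \<noteq> a2"
    have E1: "(\<exists>!x. x \<in> Dchk \<and> fchk x = 0) = S"
    proof
      assume "\<exists>!x. x \<in> Dchk \<and> fchk x = 0"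
      then show S using G1c[OF ne] by blast
    next
      assume S
      then show "\<exists>!x. x \<in> Dchk \<and> fchk x = 0" using gur_ex G1b[OF ne] by blast
    qed
    have E2: "(\<exists>!x. x \<in> Dhat \<and> fhat x = 0) = S2"
    proof
      assume "\<exists>!x. x \<in> Dhat \<and> fhat x = 0"
      moreover have "\<not> S2 \<Longrightarrow> \<forall>x\<in>Dhat. fhat x \<noteq> 0" using hat_nz G2c[OF ne] by blast
      ultimately show S2 by blast
    next
      assume S2
      then show "\<exists>!x. x \<in> Dhat \<and> fhat x = 0" using gur_ex hat_gur G2b[OF ne] by blast
    qed
    show "(\<exists>!x. x \<in> Dchk \<and> fchk x = 0) \<noteq> (\<exists>!x. x \<in> Dhat \<and> fhat x = 0)"
      using E1 E2 SS[OF ne] by simp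
    show "(\<exists>!x. x \<in> Dchk \<and> fchk x = 0) \<Longrightarrow> good_unique_root fchk Dchk"
      using E1 G1b[OF ne] by simp
    show "(\<exists>!x. x \<in> Dhat \<and> fhat x = 0) \<Longrightarrow> good_unique_root fhat Dhat"
      using E2 G2b[OF ne] hat_gur by simp
  qed
qed


end
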